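(* Let $V$ be a real vector space and $C$ a cone in $V$. Assume that $X$ and $Y$ are decomposably $C$-antichain-convex subsets of $V$ that are disjoint. (1) If $X$ is $C$-upward, then $\operatorname{co}(X)$ and $\operatorname{co}(Y)$ are disjoint. (2) If $X$ is $C$-downward, then $\operatorname{co}(X)$ and $\operatorname{co}(Y)$ are disjoint.
   Context: A cone in a real vector space $V$ is a subset $C$ with $\lambda C\subseteq C$ for all $\lambda>0$ (it may be empty and need not contain $0$). A subset $S\subseteq V$ is $C$-antichain-convex iff for all $x,y\in S$ and $\lambda\in[0,1]$ with $y-x\notin C\cup(-C)$ one has $\lambda x+(1-\lambda)y\in S$. $S$ is decomposably $C$-antichain-convex iff $S=S_1+\dots+S_n$ (Minkowski sum) for finitely many $C$-antichain-convex subsets $S_i$ of $V$. $S$ is $C$-upward iff $x\in S$, $y\in V$... precisely: iff for all $x\in S$ and $y$ with $y-x\in C$ one has $y\in S$ (equivalently $S+C\subseteq S$); $S$ is $C$-downward iff for all $x\in S$ and $y$ with $x-y\in C$ one has $y\in S$. $\operatorname{co}$ denotes the convex hull. *)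

theory Defs
  imports "HOL-Analysis.Analysis"
begin

definition is_cone :: "'a::real_vector set \<Rightarrow> bool" where
  "is_cone C \<longleftrightarrow> (\<forall>t::real. t > 0 \<longrightarrow> (\<lambda>v. t *\<^sub>R v) ` C \<subseteq> C)"

definition antichain_convex :: "'a::real_vector set \<Rightarrow> 'a set \<Rightarrow> bool" where
  "antichain_convex C S \<longleftrightarrow>
     (\<forall>x\<in>S. \<forall>y\<in>S. \<forall>t::real. 0 \<le> t \<and> t \<le> 1 \<and> y - x \<notin> C \<union> uminus ` C
        \<longrightarrow> t *\<^sub>R x + (1 - t) *\<^sub>R y \<in> S)"

definition minkowski_sum :: "'a::ab_group_add set \<Rightarrow> 'a set \<Rightarrow> 'a set" where
  "minkowski_sum A B = {a + b | a b. a \<in> A \<and> b \<in> B}"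

definition minkowski_sum_list :: "'a::ab_group_add set list \<Rightarrow> 'a set" where
  "minkowski_sum_list Ss = foldr minkowski_sum Ss {0}"

definition decomp_antichain_convex :: "'a::real_vector set \<Rightarrow> 'a set \<Rightarrow> bool" where
  "decomp_antichain_convex C S \<longleftrightarrow>
     (\<exists>Ss. Ss \<noteq> [] \<and> (\<forall>T\<in>set Ss. antichain_convex C T) \<and> S = minkowski_sum_list Ss)"

definition upward :: "'a::real_vector set \<Rightarrow> 'a set \<Rightarrow> bool" where
  "upward C S \<longleftrightarrow> (\<forall>x\<in>S. \<forall>y. y - x \<in> C \<longrightarrow> y \<in> S)"

definition downward :: "'a::real_vector set \<Rightarrow> 'a set \<Rightarrow> bool" where
  "downward C S \<longleftrightarrow> (\<forall>x\<in>S. \<forall>y. x - y \<in> C \<longrightarrow> y \<in> S)"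

end

theory Submission
  imports Defs
begin

definition Qset :: "'a::real_vector set \<Rightarrow> 'a set" where
  "Qset U = {v. \<forall>l::real\<ge>0. \<forall>x\<in>U. x + l *\<^sub>R v \<in> U}"

lemma Q_add: assumes v: "v \<in> Qset U" and w: "w \<in> Qset U" shows "v + w \<in> Qset U"
  unfolding Qset_def mem_Collect_eq
proof (intro allI impI ballI)
  fix l :: real and x
  assume l: "0 \<le> l" and x: "x \<in> U"
  have "x + l *\<^sub>R v \<in> U" using v l x unfolding Qset_def by blast
  then have "(x + l *\<^sub>R v) + l *\<^sub>R w \<in> U" using w l unfolding Qset_def by blast
  then show "x + l *\<^sub>R (v + w) \<in> U" by (simp add: add.assoc scaleR_add_right)
qed

lemma Q_scale: "v \<in> Qset U \<Longrightarrow> (a::real) \<ge> 0 \<Longrightarrow> a *\<^sub>R v \<in> Qset U"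
  unfolding Qset_def by (auto simp: zero_le_mult_iff)

lemma Q_zero: "0 \<in> Qset U"
  unfolding Qset_def by auto

lemma Q_sum: "finite F \<Longrightarrow> (\<forall>x\<in>F. f x \<in> Qset U) \<Longrightarrow> sum f F \<in> Qset U"
  by (induction F rule: finite_induct) (auto simp: Q_zero Q_add)

lemma Q_C: assumes "is_cone C" "upward C U" "v \<in> C" shows "v \<in> Qset U"
  unfolding Qset_def
proof (clarsimp)
  fix l :: real and x assume l: "0 \<le> l" and x: "x \<in> U"
  show "x + l *\<^sub>R v \<in> U"
  proof (cases "l = 0")
    case True then show ?thesis using x by simp
  next
    case False
    then have "l > 0" using l by simp
    then have "l *\<^sub>R v \<in> C" using assms(1,3) unfolding is_cone_def by blast
    then show ?thesis using assms(2) x unfolding upward_def by auto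
  qed
qed

lemma Q_mem: assumes "c \<in> U" "v \<in> Qset U" shows "c + v \<in> U"
proof -
  have "\<forall>l::real\<ge>0. \<forall>x\<in>U. x + l *\<^sub>R v \<in> U" using assms(2) unfolding Qset_def by simp
  from this[rule_format, OF zero_le_one assms(1)] show ?thesis by simp
qed

lemma max_exists:
  assumes "finite F" "F \<noteq> {}" "\<forall>a\<in>F. \<forall>b\<in>F. b - a \<in> Qset U \<or> a - b \<in> Qset U"
  shows "\<exists>t\<in>F. \<forall>x\<in>F. t - x \<in> Qset U"
  using assms
proof (induction F rule: finite_ne_induct)
  case (singleton x) then show ?case by (simp add: Q_zero)
next
  case (insert a F)
  then obtain m where m: "m \<in> F" "\<forall>x\<in>F. m - x \<in> Qset U" by auto
  have tot: "m - a \<in> Qset U \<or> a - m \<in> Qset U" using insert.prems m(1) by auto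
  show ?case
  proof (cases "a - m \<in> Qset U")
    case True
    have "\<forall>x\<in>insert a F. a - x \<in> Qset U"
    proof
      fix x assume "x \<in> insert a F"
      then show "a - x \<in> Qset U"
      proof
        assume "x = a" then show ?thesis by (simp add: Q_zero)
      next
        assume "x \<in> F"
        then have "(a - m) + (m - x) \<in> Qset U" using Q_add True m(2) by blast
        then show ?thesis by simp
      qed
    qed
    then show ?thesis by blast
  next
    case False
    then have "m - a \<in> Qset U" using tot by auto
    then show ?thesis using m by auto
  qed
qed

lemma L1:
  assumes cone: "is_cone C" and ac: "antichain_convex C S"
  shows "\<forall>F u U. card F = n \<longrightarrow> finite F \<longrightarrow> F \<subseteq> S \<longrightarrow> (\<forall>x\<in>F. 0 \<le> u x) \<longrightarrow> sum u F = 1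
     \<longrightarrow> upward C U \<longrightarrow> (\<Sum>x\<in>F. u x *\<^sub>R x) \<in> U \<longrightarrow> (\<exists>s\<in>S. s \<in> U)"
proof (induction n rule: less_induct)
  case (less n)
  show ?case
  proof (intro allI impI)
    fix F u U
    assume card: "card F = n" and fin: "finite F" and sub: "F \<subseteq> S" and nn: "\<forall>x\<in>F. 0 \<le> u x"
      and s1: "sum u F = 1" and up: "upward C U" and cU: "(\<Sum>x\<in>F. u x *\<^sub>R x) \<in> U"
    have Fne: "F \<noteq> {}" using s1 by auto
    have acS: "\<And>x y t. x \<in> S \<Longrightarrow> y \<in> S \<Longrightarrow> 0 \<le> t \<Longrightarrow> t \<le> 1 \<Longrightarrow> y - x \<notin> C \<union> uminus ` C \<Longrightarrow> t *\<^sub>R x + (1-t) *\<^sub>R y \<in> S"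
      using ac unfolding antichain_convex_def by blast
    show "\<exists>s\<in>S. s \<in> U"
    proof (cases "\<exists>a\<in>F. \<exists>b\<in>F. a \<noteq> b \<and> b - a \<notin> C \<union> uminus ` C")
      case True
      then obtain a b where ab: "a \<in> F" "b \<in> F" "a \<noteq> b" "b - a \<notin> C \<union> uminus ` C" by blast
      show ?thesis
      proof (cases "u a + u b = 0")
        case True
        then have ua: "u a = 0" using nn ab by (smt (verit))
        have cF: "card (F - {a}) < n" using card fin ab(1) by (metis card_Diff1_less)
        have "sum u (F - {a}) = 1" using s1 ua fin ab(1) by (simp add: sum_diff1)
        moreover have "(\<Sum>x\<in>F - {a}. u x *\<^sub>R x) = (\<Sum>x\<in>F. u x *\<^sub>R x)"
          using ua fin ab(1) by (simp add: sum_diff1)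
        moreover have "F - {a} \<subseteq> S" using sub by blast
        moreover have "finite (F - {a})" using fin by simp
        ultimately show ?thesis using less.IH[OF cF, rule_format, of "F - {a}" u U] nn up cU by simp
      next
        case False
        define w where "w = u a + u b"
        have wpos: "w > 0" using False nn ab unfolding w_def by (smt (verit))
        define t where "t = u a / w"
        define p where "p = t *\<^sub>R a + (1 - t) *\<^sub>R b"
        have t01: "0 \<le> t" "t \<le> 1" using nn ab wpos unfolding t_def w_def by (auto simp: divide_simps)
        have pS: "p \<in> S" unfolding p_def by (rule acS) (use sub ab t01 in auto)
        have wp: "w *\<^sub>R p = u a *\<^sub>R a + u b *\<^sub>R b"
        proof -
          have e1: "w * t = u a" using wpos unfolding t_def by simp
          have e2: "w * (1 - t) = u b" using wpos unfolding t_def w_def by (simp add: field_simps)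
          show ?thesis unfolding p_def by (simp add: scaleR_add_right e1 e2)
        qed
        define G where "G = insert p (F - {a, b})"
        have finG: "finite G" using fin unfolding G_def by simp
        have cardG: "card G < n"
        proof -
          have "card G \<le> Suc (card (F - {a,b}))" unfolding G_def using fin by (simp add: card_insert_le_m1)
          moreover have "card (F - {a,b}) = card F - 2" using ab fin by (simp add: card_Diff_subset)
          moreover have "card F \<ge> 2"
          proof -
            have "card {a,b} = 2" using ab(3) by simp
            moreover have "card {a,b} \<le> card F" using ab fin by (intro card_mono) auto
            ultimately show ?thesis by simp
          qed
          ultimately show ?thesis using card by linarith
        qed
        have GS: "G \<subseteq> S" using pS sub unfolding G_def by auto
        have cH: "(\<Sum>x\<in>F. u x *\<^sub>R x) \<in> convex hull G"
        proof -
          define y where "y = (\<lambda>x. if x = b then p else x)"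
          define u' where "u' = (\<lambda>x. if x = b then w else u x)"
          have fa: "finite (F - {a})" using fin by simp
          have "(\<Sum>x\<in>F - {a}. u' x *\<^sub>R y x) \<in> convex hull G"
          proof (rule convex_sum[OF fa convex_convex_hull])
            have "sum u' (F - {a}) = u' b + sum u' (F - {a} - {b})"
              using ab fa by (simp add: sum.remove)
            also have "\<dots> = w + sum u (F - {a} - {b})" unfolding u'_def by simp
            also have "\<dots> = 1"
            proof -
              have "sum u F = u a + sum u (F - {a})" using ab fin by (simp add: sum.remove)
              also have "sum u (F - {a}) = u b + sum u (F - {a} - {b})" using ab fa by (simp add: sum.remove)
              finally show ?thesis using s1 unfolding w_def by simp
            qed
            finally show "sum u' (F - {a}) = 1" .
            show "\<And>i. i \<in> F - {a} \<Longrightarrow> 0 \<le> u' i" using nn wpos unfolding u'_def by auto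
            show "\<And>i. i \<in> F - {a} \<Longrightarrow> y i \<in> convex hull G"
              unfolding y_def G_def by (auto intro: hull_inc)
          qed
          moreover have "(\<Sum>x\<in>F - {a}. u' x *\<^sub>R y x) = (\<Sum>x\<in>F. u x *\<^sub>R x)"
          proof -
            have h1: "(\<Sum>x\<in>F - {a}. u' x *\<^sub>R y x) = u' b *\<^sub>R y b + (\<Sum>x\<in>F - {a} - {b}. u' x *\<^sub>R y x)"
              using ab by (intro sum.remove[OF fa]) auto
            have h2: "(\<Sum>x\<in>F - {a} - {b}. u' x *\<^sub>R y x) = (\<Sum>x\<in>F - {a} - {b}. u x *\<^sub>R x)"
              unfolding u'_def y_def by (rule sum.cong) auto
            have h3: "u' b *\<^sub>R y b = u a *\<^sub>R a + u b *\<^sub>R b" unfolding u'_def y_def using wp by simp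
            have h4: "(\<Sum>x\<in>F. u x *\<^sub>R x) = u a *\<^sub>R a + (\<Sum>x\<in>F - {a}. u x *\<^sub>R x)"
              using ab fin by (simp add: sum.remove)
            have h5: "(\<Sum>x\<in>F - {a}. u x *\<^sub>R x) = u b *\<^sub>R b + (\<Sum>x\<in>F - {a} - {b}. u x *\<^sub>R x)"
              using ab by (intro sum.remove[OF fa]) auto
            show ?thesis unfolding h1 h2 h3 h4 h5 by (simp add: add.assoc)
          qed
          ultimately show ?thesis by simp
        qed
        then obtain G' u2 where G': "finite G'" "G' \<subseteq> G" "\<forall>x\<in>G'. 0 \<le> u2 x" "sum u2 G' = 1"
          "(\<Sum>x\<in>G'. u2 x *\<^sub>R x) = (\<Sum>x\<in>F. u x *\<^sub>R x)"
          unfolding convex_hull_explicit by blast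
        have "card G' < n" using card_mono[OF finG G'(2)] cardG by linarith
        moreover have "G' \<subseteq> S" using G'(2) GS by (rule subset_trans)
        moreover have "(\<Sum>x\<in>G'. u2 x *\<^sub>R x) \<in> U" using G'(5) cU by simp
        ultimately show ?thesis using less.IH[rule_format, of "card G'" G' u2 U] G'(1,3,4) up by blast
      qed
    next
      case False
      have tot: "\<forall>a\<in>F. \<forall>b\<in>F. b - a \<in> Qset U \<or> a - b \<in> Qset U"
      proof (intro ballI)
        fix a b assume ab: "a \<in> F" "b \<in> F"
        show "b - a \<in> Qset U \<or> a - b \<in> Qset U"
        proof (cases "a = b")
          case True then show ?thesis by (simp add: Q_zero)
        next
          case ne: False
          have "\<not> (a \<noteq> b \<and> b - a \<notin> C \<union> uminus ` C)" using False ab by blast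
          then have "b - a \<in> C \<or> b - a \<in> uminus ` C" using ne by simp
          then show ?thesis
          proof
            assume "b - a \<in> C" then show ?thesis using Q_C[OF cone up] by blast
          next
            assume "b - a \<in> uminus ` C"
            then obtain c where c: "c \<in> C" "b - a = - c" by blast
            then have "a - b = c" by (metis minus_diff_eq minus_minus)
            then have "a - b \<in> C" using c(1) by simp
            then show ?thesis using Q_C[OF cone up] by blast
          qed
        qed
      qed
      obtain t where t: "t \<in> F" "\<forall>x\<in>F. t - x \<in> Qset U" using max_exists[OF fin Fne tot] by blast
      have "(\<Sum>x\<in>F. u x *\<^sub>R (t - x)) \<in> Qset U"
        by (rule Q_sum[OF fin]) (use t(2) nn Q_scale in blast)
      moreover have "(\<Sum>x\<in>F. u x *\<^sub>R (t - x)) = t - (\<Sum>x\<in>F. u x *\<^sub>R x)"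
      proof -
        have "(\<Sum>x\<in>F. u x *\<^sub>R (t - x)) = (\<Sum>x\<in>F. u x *\<^sub>R t) - (\<Sum>x\<in>F. u x *\<^sub>R x)"
          by (simp add: scaleR_diff_right sum_subtractf)
        also have "(\<Sum>x\<in>F. u x *\<^sub>R t) = sum u F *\<^sub>R t" by (rule scaleR_sum_left[symmetric])
        finally show ?thesis using s1 by simp
      qed
      ultimately have "t - (\<Sum>x\<in>F. u x *\<^sub>R x) \<in> Qset U" by simp
      from Q_mem[OF cU this] have "t \<in> U" by simp
      moreover have "t \<in> S" using t(1) sub by blast
      ultimately show ?thesis by blast
    qed
  qed
qed

lemma L1':
  assumes "is_cone C" "antichain_convex C S" "upward C U" "c \<in> convex hull S" "c \<in> U"
  shows "\<exists>s\<in>S. s \<in> U"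
proof -
  obtain F u where F: "finite F" "F \<subseteq> S" "\<forall>x\<in>F. 0 \<le> u x" "sum u F = 1" "(\<Sum>x\<in>F. u x *\<^sub>R x) = c"
    using assms(4) unfolding convex_hull_explicit by blast
  have H: "\<forall>F' u' U'. card F' = card F \<longrightarrow> finite F' \<longrightarrow> F' \<subseteq> S \<longrightarrow> (\<forall>x\<in>F'. 0 \<le> u' x) \<longrightarrow> sum u' F' = 1
     \<longrightarrow> upward C U' \<longrightarrow> (\<Sum>x\<in>F'. u' x *\<^sub>R x) \<in> U' \<longrightarrow> (\<exists>s\<in>S. s \<in> U')"
    by (rule L1[OF assms(1,2)])
  have "(\<Sum>x\<in>F. u x *\<^sub>R x) \<in> U" using F(5) assms(5) by simp
  then show ?thesis using H[rule_format, OF refl F(1) F(2) _ F(4) assms(3)] F(3) by blast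
qed

lemma msum_eq: "minkowski_sum A B = A + B"
  by (auto simp: minkowski_sum_def set_plus_def)

lemma upward_shift: "upward C U \<Longrightarrow> upward C {x. x + b \<in> U}"
  unfolding upward_def
proof (intro ballI allI impI)
  fix x y assume h: "\<forall>x\<in>U. \<forall>y. y - x \<in> C \<longrightarrow> y \<in> U" "x \<in> {x. x + b \<in> U}" "y - x \<in> C"
  then have h2: "x + b \<in> U" by simp
  have "(y + b) - (x + b) \<in> C" using h(3) by simp
  then show "y \<in> {x. x + b \<in> U}" using h(1) h2 by blast
qed

lemma L:
  assumes cone: "is_cone C"
  shows "(\<forall>T\<in>set Ss. antichain_convex C T) \<Longrightarrow> upward C U \<Longrightarrow> c \<in> convex hull (minkowski_sum_list Ss)
     \<Longrightarrow> c \<in> U \<Longrightarrow> \<exists>y\<in>minkowski_sum_list Ss. y \<in> U"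
proof (induction Ss arbitrary: c U)
  case Nil
  then show ?case by (simp add: minkowski_sum_list_def)
next
  case (Cons S Ss)
  have eq: "minkowski_sum_list (S # Ss) = S + minkowski_sum_list Ss"
    by (simp add: minkowski_sum_list_def msum_eq)
  have "c \<in> convex hull S + convex hull (minkowski_sum_list Ss)"
    using Cons.prems(3) unfolding eq convex_hull_set_plus .
  then obtain a b where ab: "a \<in> convex hull S" "b \<in> convex hull (minkowski_sum_list Ss)" "c = a + b"
    unfolding set_plus_def by blast
  have "a \<in> {x. x + b \<in> U}" using ab Cons.prems(4) by simp
  then obtain s where s: "s \<in> S" "s + b \<in> U"
    using L1'[OF cone _ upward_shift[OF Cons.prems(2)] ab(1)] Cons.prems(1) by auto
  have up2: "upward C {x. x + s \<in> U}" by (rule upward_shift[OF Cons.prems(2)])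
  have "b \<in> {x. x + s \<in> U}" using s(2) by (simp add: add.commute)
  then obtain y where y: "y \<in> minkowski_sum_list Ss" "y + s \<in> U"
    using Cons.IH[OF _ up2 ab(2)] Cons.prems(1) by auto
  have "s + y \<in> minkowski_sum_list (S # Ss)" unfolding eq using s(1) y(1) by (rule set_plus_intro)
  then show ?case using y(2) by (metis add.commute)
qed

lemma ac_neg: "antichain_convex C T \<Longrightarrow> antichain_convex (uminus ` C) T"
proof -
  have "uminus ` C \<union> uminus ` uminus ` C = C \<union> uminus ` C"
    by (auto simp: image_image)
  then show "antichain_convex C T \<Longrightarrow> antichain_convex (uminus ` C) T"
    unfolding antichain_convex_def by simp
qed

lemma cone_neg: "is_cone C \<Longrightarrow> is_cone (uminus ` C)"
  unfolding is_cone_def by (auto simp: image_image)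

lemma part1:
  fixes C X Y :: "'a::real_vector set"
  assumes cone: "is_cone C" and dX: "decomp_antichain_convex C X" and dY: "decomp_antichain_convex C Y"
    and dis: "X \<inter> Y = {}" and up: "upward C X"
  shows "convex hull X \<inter> convex hull Y = {}"
proof -
  obtain Xs where Xs: "\<forall>T\<in>set Xs. antichain_convex C T" "X = minkowski_sum_list Xs"
    using dX unfolding decomp_antichain_convex_def by blast
  obtain Ys where Ys: "\<forall>T\<in>set Ys. antichain_convex C T" "Y = minkowski_sum_list Ys"
    using dY unfolding decomp_antichain_convex_def by blast
  have hX: "convex hull X \<subseteq> X"
  proof
    fix c assume c: "c \<in> convex hull X"
    show "c \<in> X"
    proof (rule ccontr)
      assume nc: "c \<notin> X"
      have upD: "upward (uminus ` C) (- X)"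
        unfolding upward_def
      proof (intro ballI allI impI)
        fix x y assume x: "x \<in> - X" and "y - x \<in> uminus ` C"
        then obtain c where c: "c \<in> C" "y - x = - c" by blast
        show "y \<in> - X"
        proof
          assume yX: "y \<in> X"
          have "x - y = c" using c(2) by (metis minus_diff_eq minus_minus)
          then have "x \<in> X" using up yX c(1) unfolding upward_def by auto
          then show False using x by simp
        qed
      qed
      have "\<forall>T\<in>set Xs. antichain_convex (uminus ` C) T" using Xs(1) ac_neg by blast
      from L[OF cone_neg[OF cone] this upD] c nc Xs(2) show False by auto
    qed
  qed
  show ?thesis
  proof (rule ccontr)
    assume "convex hull X \<inter> convex hull Y \<noteq> {}"
    then obtain c where c: "c \<in> convex hull X" "c \<in> convex hull Y" by blast
    then have "c \<in> X" using hX by blast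
    from L[OF cone Ys(1) up] c(2) this Ys(2) obtain y where "y \<in> Y" "y \<in> X" by auto
    then show False using dis by blast
  qed
qed

theorem theorem6:
  fixes C X Y :: "'a::real_vector set"
  assumes "is_cone C"
    and "decomp_antichain_convex C X"
    and "decomp_antichain_convex C Y"
    and "X \<inter> Y = {}"
  shows "(upward C X \<longrightarrow> convex hull X \<inter> convex hull Y = {})
       \<and> (downward C X \<longrightarrow> convex hull X \<inter> convex hull Y = {})"
proof (intro conjI impI)
  assume "upward C X"
  then show "convex hull X \<inter> convex hull Y = {}" by (rule part1[OF assms(1,2,3,4)])
next
  assume dn: "downward C X"
  have "upward (uminus ` C) X"
    unfolding upward_def
  proof (intro ballI allI impI)
    fix x y assume x: "x \<in> X" and "y - x \<in> uminus ` C"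
    then obtain c where c: "c \<in> C" "y - x = - c" by blast
    then have "x - y = c" by (metis minus_diff_eq minus_minus)
    then show "y \<in> X" using dn x c(1) unfolding downward_def by blast
  qed
  moreover have "decomp_antichain_convex (uminus ` C) X"
    using assms(2) unfolding decomp_antichain_convex_def using ac_neg by metis
  moreover have "decomp_antichain_convex (uminus ` C) Y"
    using assms(3) unfolding decomp_antichain_convex_def using ac_neg by metis
  ultimately show "convex hull X \<inter> convex hull Y = {}"
    using part1[OF cone_neg[OF assms(1)] _ _ assms(4)] by simp
qed

end
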